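(* Let $\mathfrak A=(S_\Omega,S_{\mathcal E},\Omega,\mathcal E,B,u)$ be an accessible GPT fragment such that for every $e\in\mathcal E$ there exists $e^\perp\in\mathcal E$ with $e+e^\perp=u$. If $\mathfrak A$ admits a simplicial-cone embedding $(\Lambda',\tau'_\Omega,\tau'_{\mathcal E})$, then it admits a simplex embedding $(\Lambda,\tau_\Omega,\tau_{\mathcal E})$ with $\Lambda=\{\lambda\in\Lambda':\tau'_{\mathcal E}(u)_\lambda\neq0\}\subseteq\Lambda'$, given by $\tau_{\mathcal E}(w)_\lambda=\tau'_{\mathcal E}(w)_\lambda/\tau'_{\mathcal E}(u)_\lambda$ and $\tau_\Omega(v)_\lambda=\tau'_{\mathcal E}(u)_\lambda\,\tau'_\Omega(v)_\lambda$ for $\lambda\in\Lambda$.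
   Context: An accessible GPT fragment $\mathfrak A=(S_\Omega,S_{\mathcal E},\Omega,\mathcal E,B,u)$ consists of: finite-dimensional real vector spaces $S_\Omega$ and $S_{\mathcal E}$; a set $\Omega\subset S_\Omega$ of states which spans $S_\Omega$; a set $\mathcal E\subset S_{\mathcal E}^*$ of effects which spans $S_{\mathcal E}^*$; a bilinear form $B:S_{\mathcal E}^*\times S_\Omega\to\mathbb R$ (the probability rule); and a unit effect $u\in\mathcal E$. A simplicial-cone embedding of $\mathfrak A$ is a finite set $\Lambda$ together with linear maps $\tau_\Omega:S_\Omega\to\mathbb R^\Lambda$ and $\tau_{\mathcal E}:S_{\mathcal E}^*\to\mathbb R^\Lambda$ such that $\tau_\Omega(s)$ is entrywise nonnegative for all $s\in\Omega$, $\tau_{\mathcal E}(e)$ is entrywise nonnegative for all $e\in\mathcal E$, and $B(w,v)=\tau_{\mathcal E}(w)\cdot\tau_\Omega(v)$ (standard dot product) for all $w\in S_{\mathcal E}^*$, $v\in S_\Omega$. A simplex embedding is a simplicial-cone embedding which additionally satisfies $\tau_{\mathcal E}(u)=(1,1,\dots,1)$. *)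

theory Defs
  imports "HOL-Analysis.Analysis"
begin

text \<open>S_Omega is modelled by a finite-dimensional real vector space type 'v, and the dual
space S_E^* (where effects live) by a finite-dimensional real vector space type 'w.
Vectors in R^Lambda (Lambda a finite set) are functions 'l => real that vanish outside Lambda.\<close>

definition accessible_gpt_fragment ::
  "('v::euclidean_space) set \<Rightarrow> ('w::euclidean_space) set \<Rightarrow> ('w \<Rightarrow> 'v \<Rightarrow> real) \<Rightarrow> 'w \<Rightarrow> bool" where
  "accessible_gpt_fragment \<Omega> \<E> B u \<longleftrightarrow>
     span \<Omega> = UNIV \<and> span \<E> = UNIV \<and> bilinear B \<and> u \<in> \<E>"

definition linear_into_RLambda :: "'l set \<Rightarrow> ('a::real_vector \<Rightarrow> 'l \<Rightarrow> real) \<Rightarrow> bool" where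
  "linear_into_RLambda \<Lambda> \<tau> \<longleftrightarrow>
     (\<forall>l\<in>\<Lambda>. linear (\<lambda>x. \<tau> x l)) \<and> (\<forall>x. \<forall>l. l \<notin> \<Lambda> \<longrightarrow> \<tau> x l = 0)"

definition simplicial_cone_embedding ::
  "('v::euclidean_space) set \<Rightarrow> ('w::euclidean_space) set \<Rightarrow> ('w \<Rightarrow> 'v \<Rightarrow> real) \<Rightarrow>
   'l set \<Rightarrow> ('v \<Rightarrow> 'l \<Rightarrow> real) \<Rightarrow> ('w \<Rightarrow> 'l \<Rightarrow> real) \<Rightarrow> bool" where
  "simplicial_cone_embedding \<Omega> \<E> B \<Lambda> \<tau>\<Omega> \<tau>\<E> \<longleftrightarrow>
     finite \<Lambda> \<and> linear_into_RLambda \<Lambda> \<tau>\<Omega> \<and> linear_into_RLambda \<Lambda> \<tau>\<E> \<and>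
     (\<forall>s\<in>\<Omega>. \<forall>l\<in>\<Lambda>. 0 \<le> \<tau>\<Omega> s l) \<and>
     (\<forall>e\<in>\<E>. \<forall>l\<in>\<Lambda>. 0 \<le> \<tau>\<E> e l) \<and>
     (\<forall>w v. B w v = (\<Sum>l\<in>\<Lambda>. \<tau>\<E> w l * \<tau>\<Omega> v l))"

definition simplex_embedding ::
  "('v::euclidean_space) set \<Rightarrow> ('w::euclidean_space) set \<Rightarrow> ('w \<Rightarrow> 'v \<Rightarrow> real) \<Rightarrow> 'w \<Rightarrow>
   'l set \<Rightarrow> ('v \<Rightarrow> 'l \<Rightarrow> real) \<Rightarrow> ('w \<Rightarrow> 'l \<Rightarrow> real) \<Rightarrow> bool" where
  "simplex_embedding \<Omega> \<E> B u \<Lambda> \<tau>\<Omega> \<tau>\<E> \<longleftrightarrow>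
     simplicial_cone_embedding \<Omega> \<E> B \<Lambda> \<tau>\<Omega> \<tau>\<E> \<and> (\<forall>l\<in>\<Lambda>. \<tau>\<E> u l = 1)"

end

theory Submission
  imports Defs
begin

lemma lin_zero:
  fixes f :: "'w::euclidean_space \<Rightarrow> real"
  assumes "linear f" "\<forall>x\<in>E. f x = 0" "span E = UNIV"
  shows "f x = 0"
proof -
  have "x \<in> span E" using assms(3) by simp
  then show ?thesis using assms(1,2) linear_eq_0_on_span by blast
qed

theorem mainTheorem4:
  fixes \<Omega> :: "('v::euclidean_space) set" and \<E> :: "('w::euclidean_space) set"
    and B :: "'w \<Rightarrow> 'v \<Rightarrow> real" and u :: 'w
    and \<Lambda>' :: "'l set" and \<tau>\<Omega>' :: "'v \<Rightarrow> 'l \<Rightarrow> real" and \<tau>\<E>' :: "'w \<Rightarrow> 'l \<Rightarrow> real"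
  assumes frag: "accessible_gpt_fragment \<Omega> \<E> B u"
    and compl: "\<forall>e\<in>\<E>. \<exists>e'\<in>\<E>. e + e' = u"
    and emb: "simplicial_cone_embedding \<Omega> \<E> B \<Lambda>' \<tau>\<Omega>' \<tau>\<E>'"
  shows "simplex_embedding \<Omega> \<E> B u {l\<in>\<Lambda>'. \<tau>\<E>' u l \<noteq> 0}
           (\<lambda>v l. if l \<in> \<Lambda>' \<and> \<tau>\<E>' u l \<noteq> 0 then \<tau>\<E>' u l * \<tau>\<Omega>' v l else 0)
           (\<lambda>w l. if l \<in> \<Lambda>' \<and> \<tau>\<E>' u l \<noteq> 0 then \<tau>\<E>' w l / \<tau>\<E>' u l else 0)"
proof -
  let ?L = "{l\<in>\<Lambda>'. \<tau>\<E>' u l \<noteq> 0}"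
  have fin: "finite \<Lambda>'" and linO: "\<forall>l\<in>\<Lambda>'. linear (\<lambda>x. \<tau>\<Omega>' x l)"
    and linE: "\<forall>l\<in>\<Lambda>'. linear (\<lambda>x. \<tau>\<E>' x l)"
    and posO: "\<forall>s\<in>\<Omega>. \<forall>l\<in>\<Lambda>'. 0 \<le> \<tau>\<Omega>' s l"
    and posE: "\<forall>e\<in>\<E>. \<forall>l\<in>\<Lambda>'. 0 \<le> \<tau>\<E>' e l"
    and Bd: "\<forall>w v. B w v = (\<Sum>l\<in>\<Lambda>'. \<tau>\<E>' w l * \<tau>\<Omega>' v l)"
    using emb unfolding simplicial_cone_embedding_def linear_into_RLambda_def by auto
  have uE: "u \<in> \<E>" and spE: "span \<E> = UNIV" using frag unfolding accessible_gpt_fragment_def by auto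
  have zero: "\<tau>\<E>' w l = 0" if l: "l \<in> \<Lambda>'" "\<tau>\<E>' u l = 0" for w l
  proof (rule lin_zero[OF _ _ spE])
    show "linear (\<lambda>x. \<tau>\<E>' x l)" using linE l by auto
    show "\<forall>x\<in>\<E>. \<tau>\<E>' x l = 0"
    proof
      fix e assume e: "e \<in> \<E>"
      then obtain e' where e': "e' \<in> \<E>" "e + e' = u" using compl by blast
      have "\<tau>\<E>' u l = \<tau>\<E>' e l + \<tau>\<E>' e' l"
        using e'(2) linear_add[of "\<lambda>x. \<tau>\<E>' x l"] linE l by metis
      moreover have "0 \<le> \<tau>\<E>' e l" "0 \<le> \<tau>\<E>' e' l" using posE e e'(1) l by auto
      ultimately show "\<tau>\<E>' e l = 0" using l by linarith
    qed
  qed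
  have upos: "0 \<le> \<tau>\<E>' u l" if "l \<in> \<Lambda>'" for l using posE uE that by auto
  have Bnew: "B w v = (\<Sum>l\<in>?L. (if l \<in> \<Lambda>' \<and> \<tau>\<E>' u l \<noteq> 0 then \<tau>\<E>' w l / \<tau>\<E>' u l else 0)
        * (if l \<in> \<Lambda>' \<and> \<tau>\<E>' u l \<noteq> 0 then \<tau>\<E>' u l * \<tau>\<Omega>' v l else 0))" for w v
  proof -
    have "B w v = (\<Sum>l\<in>\<Lambda>'. \<tau>\<E>' w l * \<tau>\<Omega>' v l)" using Bd by auto
    also have "\<dots> = (\<Sum>l\<in>?L. \<tau>\<E>' w l * \<tau>\<Omega>' v l)"
      by (rule sum.mono_neutral_right) (use fin zero in auto)
    also have "\<dots> = (\<Sum>l\<in>?L. (if l \<in> \<Lambda>' \<and> \<tau>\<E>' u l \<noteq> 0 then \<tau>\<E>' w l / \<tau>\<E>' u l else 0)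
        * (if l \<in> \<Lambda>' \<and> \<tau>\<E>' u l \<noteq> 0 then \<tau>\<E>' u l * \<tau>\<Omega>' v l else 0))"
      by (rule sum.cong) auto
    finally show ?thesis .
  qed
  have lin1: "linear (\<lambda>x. if l \<in> \<Lambda>' \<and> \<tau>\<E>' u l \<noteq> 0 then \<tau>\<E>' u l * \<tau>\<Omega>' x l else 0)"
    if "l \<in> ?L" for l
    using that linO unfolding linear_iff by (auto simp: algebra_simps)
  have lin2: "linear (\<lambda>x. if l \<in> \<Lambda>' \<and> \<tau>\<E>' u l \<noteq> 0 then \<tau>\<E>' x l / \<tau>\<E>' u l else 0)"
    if "l \<in> ?L" for l
  proof -
    have "linear (\<lambda>x. inverse (\<tau>\<E>' u l) * \<tau>\<E>' x l)" using that linE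
      unfolding linear_iff by (auto simp: algebra_simps)
    then show ?thesis using that by (simp add: divide_inverse mult.commute)
  qed
  show ?thesis
    unfolding simplex_embedding_def simplicial_cone_embedding_def linear_into_RLambda_def
    using fin lin1 lin2 Bnew posO posE upos
    by (auto intro!: mult_nonneg_nonneg divide_nonneg_nonneg)
qed

end
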